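(* Let $p$ be a prime and let $\rho\in[2,p-1]$. Then $$t_\rho(\mathbb{Z}_p)=s_\rho(\mathbb{Z}_p)=\left\lfloor\frac{p-2}{\rho-1}\right\rfloor+1.$$
   Context: Groups are written additively; $\mathbb{Z}_p=\mathbb{Z}/p\mathbb{Z}$. For $A\subseteq G$ let $A_0:=A\cup\{0\}$ and $\langle A\rangle^+_\rho:=\rho A_0=\{a_1+\dots+a_\rho:a_i\in A_0\}$. $\operatorname{diam}^+_A(G):=\min\{\rho\in\mathbb{N}_0:\langle A\rangle^+_\rho=G\}$ ($\min\varnothing=\infty$). The period of $S\subseteq G$ is $\pi(S):=\{g\in G:S+g=S\}$; $S$ is aperiodic if $\pi(S)=\{0\}$. A subset $A\subseteq G$ is $\rho$-maximal if it is maximal under inclusion subject to $\operatorname{diam}^+_A(G)\ge\rho$, i.e. subject to $\langle A\rangle^+_{\rho-1}\neq G$. With the convention $\max\varnothing=0$: $s_\rho(G):=\max\{|A|: A\subseteq G,\ \rho\le\operatorname{diam}^+_A(G)<\infty\}$ and $t_\rho(G):=\max\{|A|: A \text{ is an aperiodic } \rho\text{-maximal generating set for } G\}$. *)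

theory Defs
  imports "Berlekamp_Zassenhaus.Finite_Field" "HOL-Library.Extended_Nat"
begin

text \<open>All notions are for the whole (additive abelian) group UNIV of a type.\<close>

fun sumset_pow :: "nat \<Rightarrow> 'a::ab_group_add set \<Rightarrow> 'a set" where
  "sumset_pow 0 A = {0}"
| "sumset_pow (Suc n) A = {a + b | a b. a \<in> insert 0 A \<and> b \<in> sumset_pow n A}"

definition diam_plus :: "'a::ab_group_add set \<Rightarrow> enat" where
  "diam_plus A = (if \<exists>r. sumset_pow r A = UNIV
                   then enat (LEAST r. sumset_pow r A = UNIV) else \<infinity>)"

definition period :: "'a::ab_group_add set \<Rightarrow> 'a set" where
  "period S = {g. (\<lambda>s. s + g) ` S = S}"

definition aperiodic :: "'a::ab_group_add set \<Rightarrow> bool" where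
  "aperiodic S \<longleftrightarrow> period S = {0}"

definition rho_maximal :: "nat \<Rightarrow> 'a::ab_group_add set \<Rightarrow> bool" where
  "rho_maximal rho A \<longleftrightarrow> enat rho \<le> diam_plus A \<and>
     (\<forall>B. A \<subset> B \<longrightarrow> \<not> enat rho \<le> diam_plus B)"

definition generates :: "'a::ab_group_add set \<Rightarrow> bool" where
  "generates A \<longleftrightarrow> (\<forall>H. 0 \<in> H \<and> (\<forall>x\<in>H. \<forall>y\<in>H. x + y \<in> H) \<and> (\<forall>x\<in>H. - x \<in> H)
                       \<and> A \<subseteq> H \<longrightarrow> H = UNIV)"

text \<open>Maxima with the convention max of the empty set = 0.\<close>
definition s_rho :: "nat \<Rightarrow> 'a::{ab_group_add,finite} itself \<Rightarrow> nat" where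
  "s_rho rho _ = Max (insert 0 (card ` {A :: 'a set. enat rho \<le> diam_plus A \<and> diam_plus A < \<infinity>}))"

definition t_rho :: "nat \<Rightarrow> 'a::{ab_group_add,finite} itself \<Rightarrow> nat" where
  "t_rho rho _ = Max (insert 0 (card ` {A :: 'a set. aperiodic A \<and> rho_maximal rho A \<and> generates A}))"

end

theory Submission
  imports Defs
begin

lemma oi_add: "(of_int_mod_ring (a + b) :: 'p::finite mod_ring) = of_int_mod_ring a + of_int_mod_ring b"
  by transfer (simp add: mod_simps)

lemma oi_eq: "((of_int_mod_ring a :: 'p::finite mod_ring) = of_int_mod_ring b) \<longleftrightarrow> a mod int CARD('p) = b mod int CARD('p)"
  by transfer simp

lemma oi_0: "(of_int_mod_ring 0 :: 'p::finite mod_ring) = 0"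
  by transfer simp

lemma periodic_univ:
  fixes A :: "'p::finite mod_ring set" and d :: "'p mod_ring"
  assumes p: "prime CARD('p)" and d: "d \<noteq> 0" and ne: "a \<in> A" and cl: "\<forall>x\<in>A. x + d \<in> A"
  shows "A = UNIV"
proof -
  define P where "P = int CARD('p)"
  have pp: "prime P" using p by (simp add: P_def)
  define t where "t = to_int_mod_ring d"
  have dt: "d = of_int_mod_ring t" by (simp add: t_def)
  have trng: "0 \<le> t \<and> t < P" unfolding t_def P_def using range_to_int_mod_ring[where 'a='p] by auto
  have t0: "t \<noteq> 0" using d dt oi_0 by metis
  have "\<not> P dvd t" using trng t0 zdvd_imp_le by force
  then have "coprime t P" using pp prime_imp_coprime coprime_commute by blast
  then obtain s where s: "[t * s = 1] (mod P)" using cong_solve_coprime_int by blast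
  have mult: "a + of_int_mod_ring (int n * t) \<in> A" for n
  proof (induction n)
    case 0 then show ?case using ne oi_0 by simp
  next
    case (Suc n)
    have "a + of_int_mod_ring (int (Suc n) * t) = (a + of_int_mod_ring (int n * t)) + d"
      by (simp add: dt algebra_simps oi_add[symmetric])
    then show ?case using Suc cl by (metis add.assoc)
  qed
  have "x \<in> A" for x :: "'p mod_ring"
  proof -
    define k where "k = to_int_mod_ring (x - a)"
    define n where "n = nat ((s * k) mod P)"
    have pos: "P > 0" using pp prime_gt_0_int by blast
    have "int n * t mod P = ((s*k) mod P) * t mod P" unfolding n_def using pos by simp
    also have "\<dots> = k * (t * s) mod P" by (simp add: mod_simps algebra_simps)
    also have "\<dots> = k * 1 mod P" using s unfolding cong_def by (metis mod_mult_right_eq)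
    finally have "int n * t mod P = k mod P" by simp
    then have "of_int_mod_ring (int n * t) = (of_int_mod_ring k :: 'p mod_ring)"
      using oi_eq P_def by metis
    also have "\<dots> = x - a" by (simp add: k_def)
    finally show "x \<in> A" using mult[of n] by simp
  qed
  then show ?thesis by auto
qed

definition sset :: "'a::ab_group_add set \<Rightarrow> 'a set \<Rightarrow> 'a set" where
  "sset A B = {a + b | a b. a \<in> A \<and> b \<in> B}"

lemma card_univ_ge:
  fixes S :: "'p::finite mod_ring set"
  assumes "card S \<ge> CARD('p)" shows "S = UNIV"
  using assms card_seteq[of "UNIV :: 'p mod_ring set" S] by simp

lemma cauchy_davenport:
  fixes A B :: "'p::finite mod_ring set"
  assumes p: "prime CARD('p)" and "A \<noteq> {}" and "B \<noteq> {}"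
  shows "card (sset A B) \<ge> min CARD('p) (card A + card B - 1)"
  using assms(2,3)
proof (induction "card B" arbitrary: A B rule: less_induct)
  case less
  show ?case
  proof (cases "card B \<le> 1")
    case True
    have "card B = 1" using less.prems True card_gt_0_iff[of B] by simp
    then obtain b where B: "B = {b}" by (rule card_1_singletonE)
    have "sset A B = (\<lambda>a. a + b) ` A" unfolding sset_def B by auto
    then have "card (sset A B) = card A" by (simp add: card_image)
    then show ?thesis using B by simp
  next
    case False
    show ?thesis
    proof (cases "A = UNIV")
      case True
      obtain b0 where "b0 \<in> B" using less.prems by blast
      then have "sset A B = UNIV" unfolding sset_def True
        by auto (metis diff_add_cancel)
      then show ?thesis by simp
    next
      case notU: False
      obtain b0 b1 where b01: "b0 \<in> B" "b1 \<in> B" "b0 \<noteq> b1" using False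
        by (metis card_le_Suc0_iff_eq finite One_nat_def)
      obtain a0 where "a0 \<in> A" using less.prems by blast
      have "b1 - b0 \<noteq> 0" using b01 by simp
      then obtain a where a: "a \<in> A" "a + (b1 - b0) \<notin> A"
        using periodic_univ[OF p _ \<open>a0 \<in> A\<close>] notU by blast
      define e where "e = a - b0"
      define A' where "A' = A \<union> (\<lambda>b. b + e) ` B"
      define B' where "B' = B \<inter> {y. y + e \<in> A}"
      have b0B': "b0 \<in> B'" unfolding B'_def e_def using a b01 by simp
      have b1B': "b1 \<notin> B'" unfolding B'_def e_def using a
        by (simp add: algebra_simps)
      have lt: "card B' < card B"
        by (rule psubset_card_mono) (use b01 b1B' in \<open>auto simp: B'_def\<close>)
      have IH: "card (sset A' B') \<ge> min CARD('p) (card A' + card B' - 1)"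
        using less.hyps[OF lt] b0B' less.prems unfolding A'_def by blast
      have sub: "sset A' B' \<subseteq> sset A B"
      proof
        fix z assume "z \<in> sset A' B'"
        then obtain x y where z: "z = x + y" "x \<in> A'" "y \<in> B'" unfolding sset_def by blast
        show "z \<in> sset A B"
        proof (cases "x \<in> A")
          case True then show ?thesis using z unfolding sset_def B'_def by blast
        next
          case False
          then obtain b where b: "b \<in> B" "x = b + e" using z unfolding A'_def by blast
          have "z = (y + e) + b" using z b by (simp add: algebra_simps)
          then show ?thesis using b z unfolding sset_def B'_def by blast
        qed
      qed
      have inj: "inj_on (\<lambda>b. b + e) X" for X :: "'p mod_ring set" by (simp add: inj_on_def)
      have "A \<inter> (\<lambda>b. b + e) ` B = (\<lambda>b. b + e) ` B'" unfolding B'_def by auto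
      then have cI: "card (A \<inter> (\<lambda>b. b + e) ` B) = card B'" using inj by (simp add: card_image)
      have cB: "card ((\<lambda>b. b + e) ` B) = card B" using inj by (simp add: card_image)
      have "card A' + card B' = card A + card B"
        using card_Un_Int[of A "(\<lambda>b. b + e) ` B"] cI cB unfolding A'_def by simp
      then have "min CARD('p) (card A + card B - 1) \<le> card (sset A' B')" using IH by simp
      also have "\<dots> \<le> card (sset A B)" by (rule card_mono[OF _ sub]) simp
      finally show ?thesis .
    qed
  qed
qed

lemma sp_Suc: "sumset_pow (Suc n) A = sset (insert 0 A) (sumset_pow n A)"
  by (simp add: sset_def)

lemma sp_0_in: "(0::'a::ab_group_add) \<in> sumset_pow n A"
  by (induction n) force+

lemma sp_mono_Suc: "sumset_pow n A \<subseteq> sumset_pow (Suc n) (A::'a::ab_group_add set)"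
  by (auto simp: sset_def) (metis add_0)

lemma sp_mono: "n \<le> m \<Longrightarrow> sumset_pow n A \<subseteq> sumset_pow m (A::'a::ab_group_add set)"
  using lift_Suc_mono_le[of "\<lambda>n. sumset_pow n A"] sp_mono_Suc by blast

lemma diam_ge_iff:
  fixes A :: "'a::ab_group_add set"
  assumes "rho \<ge> 1"
  shows "enat rho \<le> diam_plus A \<longleftrightarrow> sumset_pow (rho - 1) A \<noteq> UNIV"
proof
  assume h: "enat rho \<le> diam_plus A"
  show "sumset_pow (rho - 1) A \<noteq> UNIV"
  proof
    assume u: "sumset_pow (rho - 1) A = UNIV"
    then have "(LEAST r. sumset_pow r A = UNIV) \<le> rho - 1" by (rule Least_le)
    moreover have "\<exists>r. sumset_pow r A = UNIV" using u by blast
    ultimately show False using h assms unfolding diam_plus_def by simp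
  qed
next
  assume h: "sumset_pow (rho - 1) A \<noteq> UNIV"
  show "enat rho \<le> diam_plus A"
  proof (cases "\<exists>r. sumset_pow r A = UNIV")
    case True
    have "rho \<le> (LEAST r. sumset_pow r A = UNIV)"
    proof (rule LeastI2_ex[OF True])
      fix r assume r: "sumset_pow r A = UNIV"
      show "rho \<le> r"
      proof (rule ccontr)
        assume "\<not> rho \<le> r"
        then have "sumset_pow r A \<subseteq> sumset_pow (rho - 1) A" by (intro sp_mono) simp
        then show False using r h by auto
      qed
    qed
    then show ?thesis using True unfolding diam_plus_def by simp
  next
    case False then show ?thesis unfolding diam_plus_def by simp
  qed
qed

lemma diam_fin_iff: "diam_plus A < \<infinity> \<longleftrightarrow> (\<exists>r. sumset_pow r A = UNIV)"
  unfolding diam_plus_def by simp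

lemma iter_cd:
  fixes A :: "'p::finite mod_ring set"
  assumes p: "prime CARD('p)"
  shows "card (sumset_pow n A) \<ge> min CARD('p) (n * (card (insert 0 A) - 1) + 1)"
proof (induction n)
  case 0 then show ?case by simp
next
  case (Suc n)
  define m where "m = card (insert 0 A)"
  define S where "S = sumset_pow n A"
  have m1: "m \<ge> 1" unfolding m_def by (simp add: card_gt_0_iff Suc_le_eq)
  have "min CARD('p) (m + card S - 1) \<le> card (sumset_pow (Suc n) A)"
    unfolding sp_Suc m_def S_def using cauchy_davenport[OF p, of "insert 0 A" "sumset_pow n A"] sp_0_in
    by blast
  moreover have "min CARD('p) (Suc n * (m - 1) + 1) \<le> min CARD('p) (m + card S - 1)"
  proof (cases "card S \<ge> CARD('p)")
    case True then show ?thesis using m1 by simp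
  next
    case False
    then have "card S \<ge> n * (m - 1) + 1" using Suc unfolding S_def m_def by simp
    then show ?thesis using m1 by simp
  qed
  ultimately show ?case unfolding m_def by linarith
qed

lemma upper:
  fixes A :: "'p::finite mod_ring set"
  assumes p: "prime CARD('p)" and r: "2 \<le> rho" and h: "enat rho \<le> diam_plus A"
  shows "card A \<le> (CARD('p) - 2) div (rho - 1) + 1"
proof -
  define S where "S = sumset_pow (rho - 1) A"
  define k where "k = card (insert 0 A)"
  have "S \<noteq> UNIV" using diam_ge_iff[of rho A] r h unfolding S_def by simp
  then have cS: "card S < CARD('p)" using card_univ_ge[of S] by linarith
  have "min CARD('p) ((rho - 1) * (k - 1) + 1) \<le> card S"
    using iter_cd[OF p, of "rho - 1" A] unfolding S_def k_def by simp
  then have "(rho - 1) * (k - 1) + 1 < CARD('p)" using cS by linarith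
  then have "(k - 1) * (rho - 1) \<le> CARD('p) - 2" by (simp add: mult.commute)
  then have "k - 1 \<le> (CARD('p) - 2) div (rho - 1)"
    using r by (simp add: less_eq_div_iff_mult_less_eq)
  moreover have "card A \<le> k" unfolding k_def by (rule card_mono) auto
  ultimately show ?thesis by linarith
qed

lemma oi_inj_small:
  assumes "0 \<le> i" "i < int CARD('p::finite)" "0 \<le> j" "j < int CARD('p)"
    and "(of_int_mod_ring i :: 'p mod_ring) = of_int_mod_ring j"
  shows "i = j"
  using assms oi_eq[of i j, where 'p='p] by simp

lemma sp_interval:
  fixes M :: nat
  defines "A0 \<equiv> (of_int_mod_ring ` {0..<int M} :: 'p::finite mod_ring set)"
  assumes M: "M \<ge> 1"
  shows "sumset_pow n A0 \<subseteq> of_int_mod_ring ` {0..int (n * (M - 1))}"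
proof (induction n)
  case 0 then show ?case using oi_0 by (auto simp: image_iff)
next
  case (Suc n)
  have z0: "0 \<in> A0" unfolding A0_def using M oi_0[where 'p='p] by (auto simp: image_iff intro!: bexI[of _ 0])
  show ?case
  proof
    fix z assume "z \<in> sumset_pow (Suc n) A0"
    then obtain a b where ab: "z = a + b" "a \<in> A0" "b \<in> sumset_pow n A0" using z0 by auto
    obtain i where i: "a = of_int_mod_ring i" "0 \<le> i" "i < int M" using ab unfolding A0_def by auto
    obtain j where j: "b = of_int_mod_ring j" "0 \<le> j" "j \<le> int (n * (M - 1))" using ab Suc by auto
    have zij: "z = of_int_mod_ring (i + j)" using ab i j oi_add by metis
    moreover have "int (Suc n * (M - 1)) = int (M - 1) + int (n * (M - 1))" by simp
    moreover have "i \<le> int (M - 1)" using i M by linarith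
    ultimately have "i + j \<le> int (Suc n * (M - 1))" using j by linarith
    then show "z \<in> of_int_mod_ring ` {0..int (Suc n * (M - 1))}" using i j zij by auto
  qed
qed

theorem corollary2p6:
  fixes rho :: nat
  assumes "prime CARD('p::finite)"
    and "2 \<le> rho" and "rho \<le> CARD('p) - 1"
  shows "t_rho rho TYPE('p mod_ring) = s_rho rho TYPE('p mod_ring)
       \<and> s_rho rho TYPE('p mod_ring) = (CARD('p) - 2) div (rho - 1) + 1"
proof -
  note p = assms(1)
  define P where "P = CARD('p)"
  define M where "M = (P - 2) div (rho - 1) + 1"
  define A0 where "A0 = (of_int_mod_ring ` {0..<int M} :: 'p mod_ring set)"
  have P3: "P \<ge> 3" using assms unfolding P_def by linarith
  have "0 < (P - 2) div (rho - 1)" using assms P3 unfolding P_def by (subst div_greater_zero_iff) linarith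
  then have M2: "M \<ge> 2" unfolding M_def by simp
  have MP: "M \<le> P - 1" unfolding M_def using P3 div_le_dividend[of "P - 2" "rho - 1"] by linarith
  have low: "(rho - 1) * (M - 1) \<le> P - 2" unfolding M_def by (simp add: mult.commute div_times_less_eq_dividend)
  have high: "(rho - 1) * M \<ge> P - 1"
  proof -
    have "P - 2 = (P - 2) div (rho - 1) * (rho - 1) + (P - 2) mod (rho - 1)" by (rule div_mult_mod_eq[symmetric])
    moreover have "(P - 2) mod (rho - 1) < rho - 1" using assms by simp
    moreover have "(rho - 1) * M = (P - 2) div (rho - 1) * (rho - 1) + (rho - 1)"
      unfolding M_def by (simp only: distrib_left mult.commute mult_1_right)
    ultimately show ?thesis using P3 by linarith
  qed
  have z0: "0 \<in> A0" unfolding A0_def using M2 oi_0[where 'p='p] by (auto simp: image_iff intro!: bexI[of _ 0])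
  have ins0: "insert 0 A0 = A0" using z0 by auto
  have cardA0: "card A0 = M"
  proof -
    have "inj_on (of_int_mod_ring :: int \<Rightarrow> 'p mod_ring) {0..<int M}"
      by (rule inj_onI) (use oi_inj_small[where 'p='p] MP in \<open>auto simp: P_def\<close>)
    then show ?thesis unfolding A0_def by (simp add: card_image)
  qed
  have dge: "enat rho \<le> diam_plus A0"
  proof -
    have "card (sumset_pow (rho - 1) A0) \<le> card (of_int_mod_ring ` {0..int ((rho - 1) * (M - 1))} :: 'p mod_ring set)"
      by (rule card_mono) (use sp_interval[of M "rho - 1", where 'p='p] M2 in \<open>auto simp: A0_def\<close>)
    also have "\<dots> \<le> card {0..int ((rho - 1) * (M - 1))}" by (rule card_image_le) simp
    also have "\<dots> = (rho - 1) * (M - 1) + 1" by (simp only: card_atLeastAtMost_int)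
    also have "\<dots> < P" using low P3 by linarith
    finally have "sumset_pow (rho - 1) A0 \<noteq> UNIV" unfolding P_def by auto
    then show ?thesis using diam_ge_iff[of rho A0] assms by simp
  qed
  have dfin: "diam_plus A0 < \<infinity>"
  proof -
    have "min P ((P - 1) * (M - 1) + 1) \<le> card (sumset_pow (P - 1) A0)"
      using iter_cd[OF p, of "P - 1" A0] ins0 cardA0 unfolding P_def by simp
    moreover have "(P - 1) * 1 \<le> (P - 1) * (M - 1)" using M2 by (intro mult_le_mono2) linarith
    then have "(P - 1) * (M - 1) + 1 \<ge> P" using P3 by linarith
    ultimately have "sumset_pow (P - 1) A0 = UNIV" using card_univ_ge unfolding P_def by simp
    then show ?thesis using diam_fin_iff by blast
  qed
  have rmax: "rho_maximal rho A0"
    unfolding rho_maximal_def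
  proof (intro conjI allI impI dge)
    fix B assume B: "A0 \<subset> B"
    have "card B > card A0" by (rule psubset_card_mono[OF _ B]) simp
    moreover have "card B \<le> card (insert 0 B)" by (rule card_mono) auto
    ultimately have "card (insert 0 B) - 1 \<ge> M" using cardA0 by linarith
    then have "(rho - 1) * (card (insert 0 B) - 1) + 1 \<ge> P" using high by (meson add_le_mono1 le_diff_conv mult_le_mono2 order.trans)
    then have "card (sumset_pow (rho - 1) B) \<ge> P"
      using iter_cd[OF p, of "rho - 1" B] unfolding P_def by simp
    then have "sumset_pow (rho - 1) B = UNIV" using card_univ_ge unfolding P_def by simp
    then show "\<not> enat rho \<le> diam_plus B" using diam_ge_iff[of rho B] assms by simp
  qed
  have per: "g = 0" if "(\<lambda>s. s + g) ` A0 = A0" for g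
  proof (rule ccontr)
    have cl: "\<forall>x\<in>A0. x + g \<in> A0" using that by blast
    assume "g \<noteq> 0"
    then have "A0 = UNIV" using periodic_univ[OF p _ z0 cl] by simp
    then have "card A0 = P" unfolding P_def by simp
    then show False using cardA0 MP P3 by simp
  qed
  have aper: "aperiodic A0"
    unfolding aperiodic_def period_def using per by auto
  have gen: "generates A0"
    unfolding generates_def
  proof (intro allI impI)
    fix H :: "'p mod_ring set"
    assume H: "0 \<in> H \<and> (\<forall>x\<in>H. \<forall>y\<in>H. x + y \<in> H) \<and> (\<forall>x\<in>H. - x \<in> H) \<and> A0 \<subseteq> H"
    have one: "of_int_mod_ring 1 \<in> H" using H M2 unfolding A0_def by force
    have all: "of_int_mod_ring (int n) \<in> H" for n
    proof (induction n)
      case 0 then show ?case using H oi_0 by simp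
    next
      case (Suc n)
      have "of_int_mod_ring (int (Suc n)) = (of_int_mod_ring (int n) + of_int_mod_ring 1 :: 'p mod_ring)"
        by (simp add: oi_add[symmetric] add.commute)
      then show ?case using Suc one H by metis
    qed
    have "x \<in> H" for x :: "'p mod_ring"
    proof -
      have "to_int_mod_ring x \<ge> 0" using range_to_int_mod_ring[where 'a='p] by auto
      then have "x = of_int_mod_ring (int (nat (to_int_mod_ring x)))" by simp
      then show ?thesis using all by metis
    qed
    then show "H = UNIV" by auto
  qed
  have ubS: "\<forall>y \<in> insert 0 (card ` {A :: 'p mod_ring set. enat rho \<le> diam_plus A \<and> diam_plus A < \<infinity>}). y \<le> M"
    using upper[OF p assms(2)] unfolding M_def P_def by auto
  have ubT: "\<forall>y \<in> insert 0 (card ` {A :: 'p mod_ring set. aperiodic A \<and> rho_maximal rho A \<and> generates A}). y \<le> M"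
    using upper[OF p assms(2)] unfolding M_def P_def rho_maximal_def by auto
  have s: "s_rho rho TYPE('p mod_ring) = M"
    unfolding s_rho_def
    by (rule Max_eqI) (use ubS dge dfin cardA0 in auto)
  have t: "t_rho rho TYPE('p mod_ring) = M"
    unfolding t_rho_def
    by (rule Max_eqI) (use ubT aper rmax gen cardA0 in auto)
  show ?thesis using s t unfolding M_def P_def by simp
qed

end
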